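(* Let $x \in \mathbb{C}$ be close to $0$, and let $p,q$ be the operators acting on functions (power series) $f$ of the variable $z$ defined by $$p(f) = \Big[1 - \mu z - \frac{\mu}{z}\Big] f + \Big(\frac{\mu}{z} - 5\delta\Big) f_{|z=0}, \qquad q(f) = -\sqrt{2}\,\delta\, \partial_z f_{|z=0},$$ where $\mu=\mu(x)$ and $\delta=\delta(x)$ are as in the context. For $(\alpha,\beta) \in \mathbb{C}^2$, the system $$\begin{cases} p(f) - q(g) = \alpha, \\ -q(f) + p(g) = \beta \end{cases}$$ admits a unique solution $(f,g) = \left( \sum_{n=0}^\infty f_n z^n, \sum_{n=0}^\infty g_n z^n \right)$ holomorphic in $|z| < 1$, and this solution is given by $$f = \frac{a\,z_-(\mu)}{\mu} \, \frac{1}{1 - z z_-(\mu)}, \qquad g = \frac{b\,z_-(\mu)}{\mu} \, \frac{1}{1-z z_-(\mu)},$$ where the couple $(a,b)\in \mathbb{C}^2$ is the solution of $$\begin{bmatrix} 1 - 5 \delta \frac{z_-}{\mu} & \sqrt{2}\, \delta \frac{z_-^2}{\mu} \\ \sqrt{2}\, \delta \frac{z_-^2}{\mu} & 1 - 5 \delta\frac{ z_-}{\mu} \end{bmatrix} \begin{bmatrix} a \\ b \end{bmatrix} = \begin{bmatrix} \alpha \\ \beta \end{bmatrix}, \qquad z_- = z_-(\mu).$$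
   Context: Let $r = \frac{\sqrt{2}}{3}$, and for $x$ in the complex disc $\{|x|<r\}$ set $\mu = \mu(x) = \frac{2x}{1 + \frac{x^2}{r^2}}$ and $\delta = \delta(x) = \frac{x^2}{1 + \frac{x^2}{r^2}} = \frac{x}{2}\mu$. Let $U = \mathbb{C} \setminus \{\mu \in \mathbb{C} : \mu^2 \in [\frac14, +\infty[\}$, and for $\mu \in U$ define the holomorphic function $z_-(\mu) = \frac{1}{2\mu}\big[1 - \sqrt{1-4\mu^2}\big]$, with the principal determination of the square root on $U$; it satisfies $z_-(0)=0$, $z_-'(0)=1$, $z_-^2 - \frac{z_-}{\mu} + 1 = 0$, and $|z_-(\mu)|<1$ on $U$. At $\mu=0$ (i.e. $x=0$) the quotient $\frac{z_-(\mu)}{\mu}$ is understood as its limit value $1$; in that case $\delta=0$, $p=\mathrm{Id}$ and $q=0$. *)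

theory Defs
  imports "HOL-Complex_Analysis.Complex_Analysis"
begin

definition r_const :: complex where
  "r_const = complex_of_real (sqrt 2 / 3)"

definition mu :: "complex \<Rightarrow> complex" where
  "mu x = 2 * x / (1 + x^2 / r_const^2)"

definition delta :: "complex \<Rightarrow> complex" where
  "delta x = x^2 / (1 + x^2 / r_const^2)"

definition z_minus :: "complex \<Rightarrow> complex" where
  "z_minus m = (1 - csqrt (1 - 4 * m^2)) / (2 * m)"

text \<open>The quotient z_-(mu)/mu, with its limit value 1 at mu = 0.\<close>
definition zm_over_mu :: "complex \<Rightarrow> complex" where
  "zm_over_mu m = (if m = 0 then 1 else z_minus m / m)"

text \<open>Operator p: p(f) = (1 - mu z - mu/z) f + (mu/z - 5 delta) f(0);
  at z = 0 it is given by its (removable) limit value f(0) - mu f'(0) - 5 delta f(0).\<close>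
definition p_op :: "complex \<Rightarrow> complex \<Rightarrow> (complex \<Rightarrow> complex) \<Rightarrow> complex \<Rightarrow> complex" where
  "p_op m d f z =
     (if z = 0 then f 0 - m * deriv f 0 - 5 * d * f 0
      else (1 - m * z - m / z) * f z + (m / z - 5 * d) * f 0)"

definition q_op :: "complex \<Rightarrow> (complex \<Rightarrow> complex) \<Rightarrow> complex" where
  "q_op d f = - complex_of_real (sqrt 2) * d * deriv f 0"

end

theory Submission
  imports Defs
begin


lemma zm_props:
  fixes m :: complex
  assumes "m \<noteq> 0"
  defines "s \<equiv> csqrt (1 - 4*m^2)"
  shows "z_minus m = 2*m/(1+s)" "zm_over_mu m = 2/(1+s)" "norm (1+s) \<ge> 1"
    "m * (z_minus m)^2 - z_minus m + m = 0"
proof -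
  have s2: "s^2 = 1 - 4*m^2" unfolding s_def by simp
  have "Re (1+s) \<ge> 1" using Re_csqrt[of "1 - 4*m^2"] unfolding s_def by simp
  then show n1: "norm (1+s) \<ge> 1" using complex_Re_le_cmod order_trans by blast
  hence nz: "1 + s \<noteq> 0" by auto
  show zm: "z_minus m = 2*m/(1+s)"
    unfolding z_minus_def s_def[symmetric] using nz assms s2
    by (simp add: field_simps power2_eq_square)
  show "zm_over_mu m = 2/(1+s)" unfolding zm_over_mu_def zm using assms nz by simp
  have e: "m*(2*m/(1+s))^2 - 2*m/(1+s) + m = m*(4*m^2 - 2*(1+s) + (1+s)^2)/(1+s)^2"
    using nz by (simp add: divide_simps) (simp add: algebra_simps power2_eq_square)
  have "4*m^2 - 2*(1+s)+(1+s)^2 = 0" using s2 by algebra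
  then show "m * (z_minus m)^2 - z_minus m + m = 0" unfolding zm e by simp
qed

lemma lin_sys:
  fixes A11 A12 :: complex
  assumes "A11^2 \<noteq> A12^2"
  shows "\<exists>!ab::complex \<times> complex. A11 * fst ab + A12 * snd ab = \<alpha> \<and> A12 * fst ab + A11 * snd ab = \<beta>"
proof -
  define D where "D = A11^2 - A12^2"
  have D: "D \<noteq> 0" using assms unfolding D_def by simp
  show ?thesis
  proof (rule ex1I[of _ "((A11*\<alpha> - A12*\<beta>)/D, (A11*\<beta> - A12*\<alpha>)/D)"])
    have e1: "A11*((A11*\<alpha> - A12*\<beta>)/D) + A12*((A11*\<beta> - A12*\<alpha>)/D) = (D*\<alpha>)/D"
    proof -
      have "A11*(A11*\<alpha> - A12*\<beta>) + A12*(A11*\<beta> - A12*\<alpha>) = D*\<alpha>" by (simp add: D_def algebra_simps power2_eq_square)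
      moreover have "A11*((A11*\<alpha> - A12*\<beta>)/D) + A12*((A11*\<beta> - A12*\<alpha>)/D) = (A11*(A11*\<alpha> - A12*\<beta>) + A12*(A11*\<beta> - A12*\<alpha>))/D" by (simp add: add_divide_distrib)
      ultimately show ?thesis by simp
    qed
    have e2: "A12*((A11*\<alpha> - A12*\<beta>)/D) + A11*((A11*\<beta> - A12*\<alpha>)/D) = (D*\<beta>)/D"
    proof -
      have "A12*(A11*\<alpha> - A12*\<beta>) + A11*(A11*\<beta> - A12*\<alpha>) = D*\<beta>" by (simp add: D_def algebra_simps power2_eq_square)
      moreover have "A12*((A11*\<alpha> - A12*\<beta>)/D) + A11*((A11*\<beta> - A12*\<alpha>)/D) = (A12*(A11*\<alpha> - A12*\<beta>) + A11*(A11*\<beta> - A12*\<alpha>))/D" by (simp add: add_divide_distrib)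
      ultimately show ?thesis by simp
    qed
    show "A11 * fst ((A11*\<alpha> - A12*\<beta>)/D, (A11*\<beta> - A12*\<alpha>)/D) + A12 * snd ((A11*\<alpha> - A12*\<beta>)/D, (A11*\<beta> - A12*\<alpha>)/D) = \<alpha> \<and>
      A12 * fst ((A11*\<alpha> - A12*\<beta>)/D, (A11*\<beta> - A12*\<alpha>)/D) + A11 * snd ((A11*\<alpha> - A12*\<beta>)/D, (A11*\<beta> - A12*\<alpha>)/D) = \<beta>"
      using D e1 e2 by simp
  next
    fix ab :: "complex \<times> complex"
    assume h: "A11 * fst ab + A12 * snd ab = \<alpha> \<and> A12 * fst ab + A11 * snd ab = \<beta>"
    obtain u v where ab: "ab = (u,v)" by force
    have "D * u = A11*\<alpha> - A12*\<beta>" "D * v = A11*\<beta> - A12*\<alpha>"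
      using h unfolding ab D_def by (auto simp: power2_eq_square algebra_simps)
    then show "ab = ((A11*\<alpha> - A12*\<beta>)/D, (A11*\<beta> - A12*\<alpha>)/D)"
      using D unfolding ab by (auto simp: field_simps)
  qed
qed

lemma x_props:
  fixes x :: complex
  assumes "norm x < 1/100"
  shows "x = 0 \<longleftrightarrow> mu x = 0" "norm (mu x) \<le> 4 * norm x" "norm (delta x) \<le> 2 * (norm x)^2"
    "mu x = 0 \<Longrightarrow> delta x = 0"
proof -
  have r2: "r_const^2 = 2/9" unfolding r_const_def
    by (simp add: power_divide of_real_power[symmetric] del: of_real_power)
  define D where "D = 1 + x^2 / r_const^2"
  have Dx: "D = 1 + 9/2 * x^2" unfolding D_def r2 by simp
  have "norm (9/2 * x^2) \<le> 9/2 * (1/100)^2"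
    using assms by (simp add: norm_mult norm_power power_mono)
  moreover have "norm D \<ge> 1 - norm (9/2 * x^2)" unfolding Dx using norm_triangle_ineq2[of 1 "- (9/2*x^2)"] by simp
  ultimately have "norm D \<ge> 1/2" by (simp add: power2_eq_square)
  hence D0: "D \<noteq> 0" "norm D \<ge> 1/2" by auto
  have mu: "mu x = 2*x/D" and de: "delta x = x^2/D" unfolding mu_def delta_def D_def by auto
  show "x = 0 \<longleftrightarrow> mu x = 0" unfolding mu using D0 by simp
  show "mu x = 0 \<Longrightarrow> delta x = 0" unfolding mu de using D0 by simp
  have k1: "norm x \<le> 2 * (norm D * norm x)" using mult_right_mono[OF D0(2), of "norm x"] by simp
  have k2: "norm x^2 \<le> 2 * (norm D * norm x^2)" using mult_right_mono[OF D0(2), of "norm x^2"] by simp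
  show "norm (mu x) \<le> 4 * norm x" unfolding mu norm_divide norm_mult using D0 k1
    by (simp add: divide_simps mult_ac)
  show "norm (delta x) \<le> 2 * (norm x)^2" unfolding de norm_divide norm_power using D0 k2
    by (simp add: divide_simps mult_ac)
qed



lemma homog:
  fixes m d zm c A11 A12 :: complex and h k :: "complex \<Rightarrow> complex"
  assumes m: "m \<noteq> 0" and rel: "m*zm^2 - zm + m = 0" and c: "c = zm/m" and hz: "norm zm < 1"
    and A11: "A11 = 1 - 5*d*c" and A12: "A12 = complex_of_real (sqrt 2)*d*c*zm"
    and A11nz: "A11 \<noteq> 0" and det: "A11^2 \<noteq> A12^2"
    and hh: "h holomorphic_on ball 0 1" and kh: "k holomorphic_on ball 0 1"
    and eq: "\<forall>z\<in>ball 0 1. p_op m d h z - q_op d k = 0 \<and> - q_op d h + p_op m d k z = 0"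
  shows "\<forall>z\<in>ball 0 1. h z = 0 \<and> k z = 0"
proof -
  define s2 where "s2 = complex_of_real (sqrt 2)"
  have zm0: "zm \<noteq> 0" using rel m by auto
  have c1: "c * (1 - m*zm) = 1" using rel m unfolding c by (simp add: field_simps power2_eq_square)
  have fac0: "1 - m*zm - m/zm = 0" using rel zm0 by (simp add: field_simps power2_eq_square)
  have zmb: "zm \<in> ball 0 1" using hz by simp
  have b0: "(0::complex) \<in> ball 0 1" by simp
  define h0 h1 k0 k1 where "h0 = h 0" "h1 = deriv h 0" "k0 = k 0" "k1 = deriv k 0"
  have E0h: "h0 - m*h1 - 5*d*h0 + s2*d*k1 = 0" and E0k: "k0 - m*k1 - 5*d*k0 + s2*d*h1 = 0"
  proof -
    have "p_op m d h 0 - q_op d k = 0" "- q_op d h + p_op m d k 0 = 0" using eq b0 by auto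
    thus "h0 - m*h1 - 5*d*h0 + s2*d*k1 = 0" "k0 - m*k1 - 5*d*k0 + s2*d*h1 = 0"
      unfolding p_op_def q_op_def h0_h1_k0_k1_def s2_def by (auto simp: algebra_simps)
  qed
  have "p_op m d h zm - q_op d k = 0" "- q_op d h + p_op m d k zm = 0" using eq zmb by auto
  hence E1h: "(m/zm - 5*d)*h0 + s2*d*k1 = 0" and E1k: "(m/zm - 5*d)*k0 + s2*d*h1 = 0"
    unfolding p_op_def q_op_def h0_h1_k0_k1_def s2_def using zm0 fac0 by (auto simp: add.commute)
  have cm: "c*m = zm" unfolding c using m by simp
  have cz: "c * (m/zm) = 1" using cm zm0 by (metis divide_self_if times_divide_eq_right)
  have E2h: "A11*h0 + s2*d*c*k1 = 0"
  proof -
    have "c*((m/zm - 5*d)*h0 + s2*d*k1) = 0" using E1h by simp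
    moreover have "c*((m/zm - 5*d)*h0 + s2*d*k1) = (c*(m/zm))*h0 - 5*d*c*h0 + s2*d*c*k1" by (simp add: algebra_simps)
    ultimately show ?thesis unfolding A11 cz by (simp add: algebra_simps)
  qed
  have E2k: "A11*k0 + s2*d*c*h1 = 0"
  proof -
    have "c*((m/zm - 5*d)*k0 + s2*d*h1) = 0" using E1k by simp
    moreover have "c*((m/zm - 5*d)*k0 + s2*d*h1) = (c*(m/zm))*k0 - 5*d*c*k0 + s2*d*c*h1" by (simp add: algebra_simps)
    ultimately show ?thesis unfolding A11 cz by (simp add: algebra_simps)
  qed
  have A12': "A12 = s2*d*c*zm" unfolding A12 s2_def by simp
  have "c*m*(A11*h1 + A12*k1) = 0" using E0h E2h c1 unfolding A11 A12' by algebra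
  hence F1: "A11*h1 + A12*k1 = 0" using cm zm0 by simp
  have "c*m*(A11*k1 + A12*h1) = 0" using E0k E2k c1 unfolding A11 A12' by algebra
  hence F2: "A11*k1 + A12*h1 = 0" using cm zm0 by simp
  have "(A11^2 - A12^2)*h1 = 0" using F1 F2 by algebra
  hence h10: "h1 = 0" using det by simp
  have "(A11^2 - A12^2)*k1 = 0" using F1 F2 by algebra
  hence k10: "k1 = 0" using det by simp
  have h00: "h0 = 0" using E2h k10 A11nz by simp
  have k00: "k0 = 0" using E2k h10 A11nz by simp
  have off: "h z = 0 \<and> k z = 0" if z: "z \<in> ball 0 1" "z \<noteq> 0" "z \<noteq> zm" for z
  proof -
    have fac: "1 - m*z - m/z = -(m/z)*(1 - z*zm)*(1 - z/zm)"
    proof -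
      have r: "z*(m + m*(zm*zm)) = z*zm" using rel by (simp add: algebra_simps power2_eq_square)
      show ?thesis using r zm0 z(2) by (simp add: field_simps power2_eq_square)
    qed
    have "norm (z*zm) < 1" using z(1) hz
    proof -
      have "norm z * norm zm \<le> norm z" using hz by (intro mult_left_le) auto
      thus ?thesis using z(1) by (simp add: norm_mult)
    qed
    hence "1 - z*zm \<noteq> 0" by auto
    moreover have "1 - z/zm \<noteq> 0" using z(3) zm0 by (simp add: field_simps)
    ultimately have nz: "1 - m*z - m/z \<noteq> 0" unfolding fac using m z(2) by simp
    have "p_op m d h z - q_op d k = 0" "- q_op d h + p_op m d k z = 0" using eq z(1) by auto
    hence "(1 - m*z - m/z) * h z = 0" "(1 - m*z - m/z) * k z = 0"
      unfolding p_op_def q_op_def using z(2) h00 k00 h10 k10 unfolding h0_h1_k0_k1_def by auto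
    thus ?thesis using nz by simp
  qed
  have atzm: "f zm = 0" if fh: "f holomorphic_on ball 0 1" and fz: "\<And>z. z \<in> ball 0 1 \<Longrightarrow> z \<noteq> 0 \<Longrightarrow> z \<noteq> zm \<Longrightarrow> f z = 0" for f
  proof -
    have "isCont f zm" using fh zmb
      by (meson continuous_on_eq_continuous_at holomorphic_on_imp_continuous_on open_ball)
    hence t1: "(f \<longlongrightarrow> f zm) (at zm)" by (simp add: isCont_def)
    have ev: "eventually (\<lambda>z. f z = 0) (at zm)"
    proof -
      have A: "\<forall>z. z \<noteq> zm \<and> dist z zm < min (1 - norm zm) (norm zm) \<longrightarrow> f z = 0"
      proof (intro allI impI)
        fix z assume z: "z \<noteq> zm \<and> dist z zm < min (1 - norm zm) (norm zm)"
        have "norm z < 1" using z norm_triangle_ineq2[of z zm] by (simp add: dist_norm) 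
        moreover have "z \<noteq> 0" using z by (auto simp: dist_norm)
        ultimately show "f z = 0" using fz z by simp
      qed
      have "0 < min (1 - norm zm) (norm zm)" using hz zm0 by simp
      thus ?thesis unfolding eventually_at using A by blast
    qed
    have "(f \<longlongrightarrow> 0) (at zm)" using tendsto_eventually[of "\<lambda>_. 0"] Lim_transform_eventually
      by (metis (mono_tags, lifting) ev eventually_mono tendsto_const)
    with t1 show ?thesis using tendsto_unique at_neq_bot by blast
  qed
  show ?thesis
  proof
    fix z :: complex assume z: "z \<in> ball 0 1"
    consider "z = 0" | "z = zm" | "z \<noteq> 0 \<and> z \<noteq> zm" by blast
    then show "h z = 0 \<and> k z = 0"
    proof cases
      case 1 then show ?thesis using h00 k00 unfolding h0_h1_k0_k1_def by simp
    next
      case 2 then show ?thesis using atzm[OF hh] atzm[OF kh] off by blast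
    next
      case 3 then show ?thesis using off z by blast
    qed
  qed
qed



lemma F_facts:
  fixes zm a c :: complex
  assumes hz: "norm zm < 1"
  shows "(\<lambda>z. a * c / (1 - z * zm)) holomorphic_on ball 0 1"
    "deriv (\<lambda>z. a * c / (1 - z * zm)) 0 = a * c * zm"
    "\<And>z. z \<in> ball 0 1 \<Longrightarrow> 1 - z * zm \<noteq> 0"
proof -
  show nz: "1 - z * zm \<noteq> 0" if "z \<in> ball 0 1" for z
  proof -
    have "norm (z*zm) < 1"
    proof -
      have "norm z * norm zm \<le> norm z" using hz by (intro mult_left_le) auto
      thus ?thesis using that by (simp add: norm_mult)
    qed
    thus ?thesis by auto
  qed
  show "(\<lambda>z. a * c / (1 - z * zm)) holomorphic_on ball 0 1"
    using nz by (auto intro!: holomorphic_intros)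
  have "((\<lambda>z. a * c / (1 - z * zm)) has_field_derivative a * c * zm) (at 0)"
    by (rule derivative_eq_intros refl | simp)+
  thus "deriv (\<lambda>z. a * c / (1 - z * zm)) 0 = a * c * zm" by (rule DERIV_imp_deriv)
qed

lemma pF:
  fixes m d zm c a z :: complex
  assumes m: "m \<noteq> 0" and rel: "m*zm^2 - zm + m = 0" and c: "c = zm/m" and hz: "norm zm < 1"
    and z: "z \<in> ball 0 1"
  shows "p_op m d (\<lambda>z. a * c / (1 - z * zm)) z = a * (1 - 5*d*c)"
proof -
  have zm0: "zm \<noteq> 0" using rel m by auto
  have c1: "c * (1 - m*zm) = 1" using rel m unfolding c by (simp add: field_simps power2_eq_square)
  have cm: "c*m = zm" unfolding c using m by simp
  have cz: "c * (m/zm) = 1" using cm zm0 by (metis divide_self_if times_divide_eq_right)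
  note FF = F_facts(1)[of zm a c, OF hz] F_facts(2)[of zm a c, OF hz] F_facts(3)[OF hz]
  show ?thesis
  proof (cases "z = 0")
    case True
    have "p_op m d (\<lambda>z. a * c / (1 - z * zm)) 0 = a*c - m*(a*c*zm) - 5*d*(a*c)"
      unfolding p_op_def using FF(2) by simp
    also have "\<dots> = a*(c*(1 - m*zm)) - 5*d*(a*c)" by (simp add: algebra_simps)
    also have "\<dots> = a*(1 - 5*d*c)" unfolding c1 by (simp add: algebra_simps)
    finally show ?thesis using True by simp
  next
    case False
    have fac: "1 - m*z - m/z = -(m/z)*(1 - z*zm)*(1 - z/zm)"
    proof -
      have r: "z*(m + m*(zm*zm)) = z*zm" using rel by (simp add: algebra_simps power2_eq_square)
      show ?thesis using r zm0 False by (simp add: field_simps power2_eq_square)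
    qed
    have nz: "1 - z*zm \<noteq> 0" using FF(3) z by simp
    have "(1 - m*z - m/z) * (a*c/(1 - z*zm)) = -(m/z)*(1 - z/zm)*(a*c)"
      unfolding fac using nz False zm0 by (simp add: field_simps)
    also have "\<dots> = -(m/z)*a*c + a*(c*(m/zm))" using False zm0 by (simp add: field_simps)
    also have "\<dots> = -(m/z)*a*c + a" using cz by simp
    finally have e: "(1 - m*z - m/z) * (a*c/(1 - z*zm)) = -(m/z)*a*c + a" .
    show ?thesis unfolding p_op_def using False e by (simp add: algebra_simps)
  qed
qed



lemma core:
  fixes m d zm c :: complex
  assumes hz: "norm zm < 1"
   and case0: "m = 0 \<Longrightarrow> d = 0 \<and> zm = 0 \<and> c = 1"
   and case1: "m \<noteq> 0 \<Longrightarrow> m*zm^2 - zm + m = 0 \<and> c = zm/m"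
   and A11nz: "1 - 5*d*c \<noteq> 0"
   and det: "(1 - 5*d*c)^2 \<noteq> (complex_of_real (sqrt 2) * d * zm^2 * (if m = 0 then 0 else 1 / m))^2"
  shows "(let A11 = 1 - 5 * d * c; A12 = complex_of_real (sqrt 2) * d * zm^2 * (if m = 0 then 0 else 1 / m)
      in
      (\<forall>\<alpha> \<beta>::complex. \<exists>!ab::complex \<times> complex.
          A11 * fst ab + A12 * snd ab = \<alpha> \<and> A12 * fst ab + A11 * snd ab = \<beta>) \<and>
      (\<forall>\<alpha> \<beta> a b::complex.
          A11 * a + A12 * b = \<alpha> \<and> A12 * a + A11 * b = \<beta> \<longrightarrow>
          (let F = (\<lambda>z. a * c / (1 - z * zm)); G = (\<lambda>z. b * c / (1 - z * zm)) in
            F holomorphic_on ball 0 1 \<and> G holomorphic_on ball 0 1 \<and>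
            (\<forall>z\<in>ball 0 1. p_op m d F z - q_op d G = \<alpha> \<and> - q_op d F + p_op m d G z = \<beta>) \<and>
            (\<forall>f g. f holomorphic_on ball 0 1 \<and> g holomorphic_on ball 0 1 \<and>
                (\<forall>z\<in>ball 0 1. p_op m d f z - q_op d g = \<alpha> \<and> - q_op d f + p_op m d g z = \<beta>)
                \<longrightarrow> (\<forall>z\<in>ball 0 1. f z = F z \<and> g z = G z)))))"
proof -
  define A11 where "A11 = 1 - 5 * d * c"
  define A12 where "A12 = complex_of_real (sqrt 2) * d * zm^2 * (if m = 0 then 0 else 1 / m)"
  define s2 where "s2 = complex_of_real (sqrt 2)"
  have A12': "A12 = s2 * d * c * zm"
  proof (cases "m = 0")
    case True then show ?thesis using case0 unfolding A12_def by simp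
  next
    case False then show ?thesis using case1 unfolding A12_def s2_def by (simp add: power2_eq_square)
  qed
  have P1: "\<forall>\<alpha> \<beta>::complex. \<exists>!ab::complex \<times> complex.
          A11 * fst ab + A12 * snd ab = \<alpha> \<and> A12 * fst ab + A11 * snd ab = \<beta>"
    using det unfolding A11_def A12_def by (intro allI lin_sys)
  have P2: "F holomorphic_on ball 0 1 \<and> G holomorphic_on ball 0 1 \<and>
            (\<forall>z\<in>ball 0 1. p_op m d F z - q_op d G = \<alpha> \<and> - q_op d F + p_op m d G z = \<beta>) \<and>
            (\<forall>f g. f holomorphic_on ball 0 1 \<and> g holomorphic_on ball 0 1 \<and>
                (\<forall>z\<in>ball 0 1. p_op m d f z - q_op d g = \<alpha> \<and> - q_op d f + p_op m d g z = \<beta>)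
                \<longrightarrow> (\<forall>z\<in>ball 0 1. f z = F z \<and> g z = G z))"
    if ab: "A11 * a + A12 * b = \<alpha> \<and> A12 * a + A11 * b = \<beta>"
      and Fd: "F = (\<lambda>z. a * c / (1 - z * zm))" and Gd: "G = (\<lambda>z. b * c / (1 - z * zm))"
    for \<alpha> \<beta> a b F G
  proof -
    have FF: "F holomorphic_on ball 0 1" "deriv F 0 = a*c*zm"
      unfolding Fd using F_facts(1)[of zm a c, OF hz] F_facts(2)[of zm a c, OF hz] by auto
    have GG: "G holomorphic_on ball 0 1" "deriv G 0 = b*c*zm"
      unfolding Gd using F_facts(1)[of zm b c, OF hz] F_facts(2)[of zm b c, OF hz] by auto
    have qF: "q_op d F = - s2*d*(a*c*zm)" unfolding q_op_def FF s2_def by simp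
    have qG: "q_op d G = - s2*d*(b*c*zm)" unfolding q_op_def GG s2_def by simp
    have pFG: "p_op m d F z = A11*a \<and> p_op m d G z = A11*b" if z: "z \<in> ball 0 1" for z
    proof (cases "m = 0")
      case True
      then have "d = 0" "zm = 0" "c = 1" using case0 by auto
      then show ?thesis unfolding Fd Gd p_op_def A11_def using True by simp
    next
      case False
      have r: "m*zm^2 - zm + m = 0" "c = zm/m" using case1[OF False] by auto
      show ?thesis using pF[OF False r hz z, of d a] pF[OF False r hz z, of d b]
        unfolding Fd Gd A11_def by auto
    qed
    have EQ: "\<forall>z\<in>ball 0 1. p_op m d F z - q_op d G = \<alpha> \<and> - q_op d F + p_op m d G z = \<beta>"
    proof
      fix z :: complex assume z: "z \<in> ball 0 1"
      have "p_op m d F z - q_op d G = A11*a + A12*b" "- q_op d F + p_op m d G z = A12*a + A11*b"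
        using pFG[OF z] qF qG unfolding A12' by (auto simp: algebra_simps)
      then show "p_op m d F z - q_op d G = \<alpha> \<and> - q_op d F + p_op m d G z = \<beta>" using ab by simp
    qed
    have UN: "\<forall>z\<in>ball 0 1. f z = F z \<and> g z = G z"
      if fh: "f holomorphic_on ball 0 1" and gh: "g holomorphic_on ball 0 1"
        and feq: "\<forall>z\<in>ball 0 1. p_op m d f z - q_op d g = \<alpha> \<and> - q_op d f + p_op m d g z = \<beta>" for f g
    proof (cases "m = 0")
      case True
      then have dd: "d = 0" "zm = 0" "c = 1" using case0 by auto
      show ?thesis
      proof
        fix z :: complex assume z: "z \<in> ball 0 1"
        have "p_op m d f z - q_op d g = \<alpha> \<and> - q_op d f + p_op m d g z = \<beta>" using feq z by blast
        hence "f z = \<alpha> \<and> g z = \<beta>" unfolding p_op_def q_op_def using True dd by (cases "z = 0") auto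
        moreover have "\<alpha> = a" "\<beta> = b" using ab True dd unfolding A11_def A12_def by auto
        ultimately show "f z = F z \<and> g z = G z" unfolding Fd Gd dd by simp
      qed
    next
      case False
      note c1 = case1[OF False]
      define h where "h = (\<lambda>z. f z - F z)"
      define k where "k = (\<lambda>z. g z - G z)"
      have b0: "(0::complex) \<in> ball 0 1" by simp
      have dif: "f field_differentiable at 0" "F field_differentiable at 0"
                "g field_differentiable at 0" "G field_differentiable at 0"
        using holomorphic_on_imp_differentiable_at[OF _ open_ball b0] fh gh FF(1) GG(1) by auto
      have dh: "deriv h 0 = deriv f 0 - deriv F 0" unfolding h_def using deriv_diff[OF dif(1,2)] by simp
      have dk: "deriv k 0 = deriv g 0 - deriv G 0" unfolding k_def using deriv_diff[OF dif(3,4)] by simp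
      have ph: "p_op m d h z = p_op m d f z - p_op m d F z" for z
        unfolding p_op_def dh by (simp add: h_def algebra_simps)
      have pk: "p_op m d k z = p_op m d g z - p_op m d G z" for z
        unfolding p_op_def dk by (simp add: k_def algebra_simps)
      have qh: "q_op d h = q_op d f - q_op d F" unfolding q_op_def dh by (simp add: algebra_simps)
      have qk: "q_op d k = q_op d g - q_op d G" unfolding q_op_def dk by (simp add: algebra_simps)
      have hh: "h holomorphic_on ball 0 1" unfolding h_def using fh FF(1) by (intro holomorphic_intros)
      have kh: "k holomorphic_on ball 0 1" unfolding k_def using gh GG(1) by (intro holomorphic_intros)
      have heq: "\<forall>z\<in>ball 0 1. p_op m d h z - q_op d k = 0 \<and> - q_op d h + p_op m d k z = 0"
        using feq EQ unfolding ph pk qh qk by (auto simp: algebra_simps)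
      have A12'': "A12 = complex_of_real (sqrt 2)*d*c*zm" unfolding A12' s2_def ..
      have det': "A11^2 \<noteq> A12^2" using det unfolding A11_def A12_def .
      have "\<forall>z\<in>ball 0 1. h z = 0 \<and> k z = 0"
        using homog[OF False _ _ hz A11_def A12'' _ det' hh kh heq] c1 A11nz unfolding A11_def by blast
      then show ?thesis unfolding h_def k_def by auto
    qed
    show ?thesis using FF(1) GG(1) EQ UN by blast
  qed
  show ?thesis unfolding Let_def A11_def[symmetric] A12_def[symmetric]
  proof (rule conjI[OF P1], intro allI impI)
    fix \<alpha> \<beta> a b assume H: "A11 * a + A12 * b = \<alpha> \<and> A12 * a + A11 * b = \<beta>"
    show "(\<lambda>z. a * c / (1 - z * zm)) holomorphic_on ball 0 1 \<and>
    (\<lambda>z. b * c / (1 - z * zm)) holomorphic_on ball 0 1 \<and>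
    (\<forall>z\<in>ball 0 1.
        p_op m d (\<lambda>z. a * c / (1 - z * zm)) z - q_op d (\<lambda>z. b * c / (1 - z * zm)) = \<alpha> \<and>
        - q_op d (\<lambda>z. a * c / (1 - z * zm)) + p_op m d (\<lambda>z. b * c / (1 - z * zm)) z = \<beta>) \<and>
    (\<forall>f g. f holomorphic_on ball 0 1 \<and>
           g holomorphic_on ball 0 1 \<and>
           (\<forall>z\<in>ball 0 1. p_op m d f z - q_op d g = \<alpha> \<and> - q_op d f + p_op m d g z = \<beta>) \<longrightarrow>
           (\<forall>z\<in>ball 0 1. f z = a * c / (1 - z * zm) \<and> g z = b * c / (1 - z * zm)))"
      using P2[OF H refl refl] by simp
  qed
qed



lemma s2b: "sqrt 2 < (3/2::real)"
  by (rule real_less_lsqrt) (auto simp: power2_eq_square)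

lemma bounds:
  fixes m d zm c :: complex
  assumes d: "norm d \<le> 1/1000" and c: "norm c \<le> 2" and zm: "norm zm \<le> 1"
    and A12: "complex_of_real (sqrt 2) * d * zm^2 * (if m = 0 then 0 else 1 / m) = complex_of_real (sqrt 2) * d * c * zm"
  shows "1 - 5*d*c \<noteq> 0"
    "(1 - 5*d*c)^2 \<noteq> (complex_of_real (sqrt 2) * d * zm^2 * (if m = 0 then 0 else 1 / m))^2"
proof -
  have n5: "norm (5*d*c) \<le> 5 * (1/1000) * 2"
    unfolding norm_mult using d c by (intro mult_mono) auto
  have nA11: "norm (1 - 5*d*c) \<ge> 1 - 1/100"
    using norm_triangle_ineq2[of 1 "5*d*c"] n5 by simp
  thus "1 - 5*d*c \<noteq> 0" by auto
  have "norm (complex_of_real (sqrt 2) * d * c * zm) \<le> (3/2) * (1/1000) * 2 * 1"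
    unfolding norm_mult using d c zm s2b by (intro mult_mono) auto
  hence nA12: "norm (complex_of_real (sqrt 2) * d * zm^2 * (if m = 0 then 0 else 1 / m)) < 1 - 1/100"
    unfolding A12 by simp
  show "(1 - 5*d*c)^2 \<noteq> (complex_of_real (sqrt 2) * d * zm^2 * (if m = 0 then 0 else 1 / m))^2"
  proof
    assume "(1 - 5*d*c)^2 = (complex_of_real (sqrt 2) * d * zm^2 * (if m = 0 then 0 else 1 / m))^2"
    hence "norm (1 - 5*d*c) ^2 = norm (complex_of_real (sqrt 2) * d * zm^2 * (if m = 0 then 0 else 1 / m))^2"
      by (metis norm_power)
    hence "norm (1 - 5*d*c) = norm (complex_of_real (sqrt 2) * d * zm^2 * (if m = 0 then 0 else 1 / m))"
      using power2_eq_iff_nonneg norm_ge_zero by blast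
    thus False using nA11 nA12 by simp
  qed
qed

lemma main_x:
  fixes x m d zm c :: complex
  assumes x: "norm x < 1/100" and m_def: "m = mu x" and d_def: "d = delta x"
    and zm_def: "zm = z_minus m" and c_def: "c = zm_over_mu m"
  shows "(let A11 = 1 - 5 * d * c; A12 = complex_of_real (sqrt 2) * d * zm^2 * (if m = 0 then 0 else 1 / m)
      in
      (\<forall>\<alpha> \<beta>::complex. \<exists>!ab::complex \<times> complex.
          A11 * fst ab + A12 * snd ab = \<alpha> \<and> A12 * fst ab + A11 * snd ab = \<beta>) \<and>
      (\<forall>\<alpha> \<beta> a b::complex.
          A11 * a + A12 * b = \<alpha> \<and> A12 * a + A11 * b = \<beta> \<longrightarrow>
          (let F = (\<lambda>z. a * c / (1 - z * zm)); G = (\<lambda>z. b * c / (1 - z * zm)) in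
            F holomorphic_on ball 0 1 \<and> G holomorphic_on ball 0 1 \<and>
            (\<forall>z\<in>ball 0 1. p_op m d F z - q_op d G = \<alpha> \<and> - q_op d F + p_op m d G z = \<beta>) \<and>
            (\<forall>f g. f holomorphic_on ball 0 1 \<and> g holomorphic_on ball 0 1 \<and>
                (\<forall>z\<in>ball 0 1. p_op m d f z - q_op d g = \<alpha> \<and> - q_op d f + p_op m d g z = \<beta>)
                \<longrightarrow> (\<forall>z\<in>ball 0 1. f z = F z \<and> g z = G z)))))"
proof -
  note XP = x_props[OF x, folded m_def d_def]
  have case0: "m = 0 \<Longrightarrow> d = 0 \<and> zm = 0 \<and> c = 1"
    using XP(4) unfolding zm_def c_def z_minus_def zm_over_mu_def by simp
  have case1: "m \<noteq> 0 \<Longrightarrow> m*zm^2 - zm + m = 0 \<and> c = zm/m"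
    unfolding zm_def c_def using zm_props(4) zm_over_mu_def by auto
  have zc: "norm zm \<le> 8/100 \<and> norm c \<le> 2"
  proof (cases "m = 0")
    case True then show ?thesis using case0 by simp
  next
    case False
    note Z = zm_props[OF False]
    define s where "s = csqrt (1 - 4 * m\<^sup>2)"
    have n1: "norm (1+s) \<ge> 1" using Z(3) unfolding s_def .
    have "norm zm = 2 * norm m / norm (1+s)" unfolding zm_def Z(1) s_def[symmetric] by (simp add: norm_mult norm_divide)
    also have "\<dots> \<le> 2 * norm m" using n1 by (simp add: divide_simps mult_left_mono mult_ac)
    also have "\<dots> \<le> 8/100" using XP(2) x by simp
    finally have a1: "norm zm \<le> 8/100" .
    have "norm c = 2 / norm (1+s)" unfolding c_def Z(2) s_def[symmetric] by (simp add: norm_divide)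
    also have "\<dots> \<le> 2" using n1 by (simp add: divide_simps)
    finally show ?thesis using a1 by simp
  qed
  have dn: "norm d \<le> 1/1000"
  proof -
    have "norm x ^2 \<le> (1/100)^2" using x by (intro power_mono) auto
    hence "2 * norm x ^2 \<le> 2 * (1/100)^2" by linarith
    thus ?thesis using XP(3) by (simp add: power2_eq_square)
  qed
  have A12: "complex_of_real (sqrt 2) * d * zm^2 * (if m = 0 then 0 else 1 / m) = complex_of_real (sqrt 2) * d * c * zm"
  proof (cases "m = 0")
    case True then show ?thesis using case0 by simp
  next
    case False then show ?thesis using case1 by (simp add: power2_eq_square)
  qed
  have hz: "norm zm < 1" using zc by simp
  note B = bounds[of d c zm m, OF dn _ _ A12]
  show ?thesis using zc hz by (intro core[OF hz case0 case1 B]) auto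
qed

theorem lemma7:
  "\<exists>\<epsilon>>0. \<forall>x::complex. norm x < \<epsilon> \<longrightarrow>
     (let m = mu x; d = delta x; zm = z_minus m; c = zm_over_mu m;
          A11 = 1 - 5 * d * c; A12 = complex_of_real (sqrt 2) * d * zm^2 * (if m = 0 then 0 else 1 / m)
      in
      (\<forall>\<alpha> \<beta>::complex. \<exists>!ab::complex \<times> complex.
          A11 * fst ab + A12 * snd ab = \<alpha> \<and> A12 * fst ab + A11 * snd ab = \<beta>) \<and>
      (\<forall>\<alpha> \<beta> a b::complex.
          A11 * a + A12 * b = \<alpha> \<and> A12 * a + A11 * b = \<beta> \<longrightarrow>
          (let F = (\<lambda>z. a * c / (1 - z * zm)); G = (\<lambda>z. b * c / (1 - z * zm)) in
            F holomorphic_on ball 0 1 \<and> G holomorphic_on ball 0 1 \<and>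
            (\<forall>z\<in>ball 0 1. p_op m d F z - q_op d G = \<alpha> \<and> - q_op d F + p_op m d G z = \<beta>) \<and>
            (\<forall>f g. f holomorphic_on ball 0 1 \<and> g holomorphic_on ball 0 1 \<and>
                (\<forall>z\<in>ball 0 1. p_op m d f z - q_op d g = \<alpha> \<and> - q_op d f + p_op m d g z = \<beta>)
                \<longrightarrow> (\<forall>z\<in>ball 0 1. f z = F z \<and> g z = G z)))))"
proof (intro exI[of _ "1/100"] conjI allI impI)
  show "(0::real) < 1/100" by simp
  fix x :: complex assume x: "norm x < 1/100"
  show "let m = mu x; d = delta x; zm = z_minus m; c = zm_over_mu m;
          A11 = 1 - 5 * d * c; A12 = complex_of_real (sqrt 2) * d * zm^2 * (if m = 0 then 0 else 1 / m)
      in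
      (\<forall>\<alpha> \<beta>::complex. \<exists>!ab::complex \<times> complex.
          A11 * fst ab + A12 * snd ab = \<alpha> \<and> A12 * fst ab + A11 * snd ab = \<beta>) \<and>
      (\<forall>\<alpha> \<beta> a b::complex.
          A11 * a + A12 * b = \<alpha> \<and> A12 * a + A11 * b = \<beta> \<longrightarrow>
          (let F = (\<lambda>z. a * c / (1 - z * zm)); G = (\<lambda>z. b * c / (1 - z * zm)) in
            F holomorphic_on ball 0 1 \<and> G holomorphic_on ball 0 1 \<and>
            (\<forall>z\<in>ball 0 1. p_op m d F z - q_op d G = \<alpha> \<and> - q_op d F + p_op m d G z = \<beta>) \<and>
            (\<forall>f g. f holomorphic_on ball 0 1 \<and> g holomorphic_on ball 0 1 \<and>
                (\<forall>z\<in>ball 0 1. p_op m d f z - q_op d g = \<alpha> \<and> - q_op d f + p_op m d g z = \<beta>)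
                \<longrightarrow> (\<forall>z\<in>ball 0 1. f z = F z \<and> g z = G z))))"
    unfolding Let_def by (rule main_x[OF x refl refl refl refl, unfolded Let_def])
qed

end
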